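(* Let $a\in\mathbb{Z}$ and $b\in\mathbb{Z}_{\le0}$. Expand $q^{-\frac12(a-b)}X_4E_{(a,b)}-E_{(a-1,b-1)}$ as a $\mathbb{Z}[q^{\pm\frac12}]$-linear combination of standard monomials. Then every standard monomial $E_{(c,d)}$ occurring with nonzero coefficient satisfies: $c\ge a-1$ if $a>0$ and $c\ge a$ if $a\le0$; moreover $c\le a-b$ if $d\ge0$, and $c-d\le a-b$ if $d<0$.
   Context: Let $\mathcal{T}$ be the quantum torus over $\mathbb{Z}[q^{\pm\frac12}]$ generated by $X_1^{\pm1},X_2^{\pm1}$ with $X_1X_2=qX_2X_1$, with skew field of fractions $\mathcal{F}$. Define $X_k\in\mathcal{F}$ ($k\in\mathbb{Z}$) by $X_{k-1}X_{k+1}=q^{\frac12}X_k+1$ for $k$ odd and $X_{k-1}X_{k+1}=q^2X_k^4+1$ for $k$ even; $\mathcal{A}_q(1,4)$ is the $\mathbb{Z}[q^{\pm\frac12}]$-subalgebra of $\mathcal{F}$ generated by all $X_k$. For $x\in\mathbb{Z}$, $[x]_+=\max(x,0)$. Standard monomials: $E_{(a,b)}=q^{-\frac12ab}X_3^{[-a]_+}X_1^{[a]_+}X_2^{[b]_+}X_0^{[-b]_+}$ for $(a,b)\in\mathbb{Z}^2$; they form a $\mathbb{Z}[q^{\pm\frac12}]$-basis of $\mathcal{A}_q(1,4)$. *)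

theory Defs
  imports Main
begin

text \<open>Ambient division ring 'a plays the role of the skew field F.  The parameter
  Q stands for q^(1/2) (so q = Q^2, q^2 = Q^4), X :: int => 'a is the family X_k.\<close>

definition posp :: "int \<Rightarrow> nat" where
  "posp x = nat (max x 0)"

definition stdmon :: "'a::division_ring \<Rightarrow> (int \<Rightarrow> 'a) \<Rightarrow> int \<Rightarrow> int \<Rightarrow> 'a" where
  "stdmon Q X a b = Q powi (- (a * b)) * X 3 ^ posp (- a) * X 1 ^ posp a
                      * X 2 ^ posp b * X 0 ^ posp (- b)"

definition quantum_torus_gens :: "'a::division_ring \<Rightarrow> 'a \<Rightarrow> 'a \<Rightarrow> bool" where
  "quantum_torus_gens Q X1 X2 \<longleftrightarrow>
     (\<forall>y. Q * y = y * Q) \<and> X1 * X2 = Q^2 * (X2 * X1) \<and>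
     (\<forall>g :: int \<times> int \<times> int \<Rightarrow> int. finite {p. g p \<noteq> 0} \<longrightarrow>
        (\<Sum>(i, a, b)\<in>{p. g p \<noteq> 0}. of_int (g (i, a, b)) * Q powi i * X1 powi a * X2 powi b) = 0
        \<longrightarrow> (\<forall>p. g p = 0))"

definition cluster_seq :: "'a::division_ring \<Rightarrow> (int \<Rightarrow> 'a) \<Rightarrow> bool" where
  "cluster_seq Q X \<longleftrightarrow>
     (\<forall>k. odd k \<longrightarrow> X (k - 1) * X (k + 1) = Q * X k + 1) \<and>
     (\<forall>k. even k \<longrightarrow> X (k - 1) * X (k + 1) = Q ^ 4 * X k ^ 4 + 1)"

end

theory Submission
  imports Defs
begin

lemma central_pow:
  fixes c :: "'a::division_ring"
  assumes "\<And>z. c * z = z * c"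
  shows "c ^ n * z = z * c ^ n"
proof (induction n)
  case (Suc n)
  have "c ^ Suc n * z = c * (c^n * z)" by (simp add: mult.assoc)
  also have "\<dots> = c * (z * c^n)" using Suc by simp
  also have "\<dots> = (c * z) * c^n" by (simp only: mult.assoc)
  also have "\<dots> = (z * c) * c^n" by (simp only: assms)
  also have "\<dots> = z * c ^ Suc n" by (simp only: mult.assoc power_Suc)
  finally show ?case .
qed simp

lemma central_inv:
  fixes c :: "'a::division_ring"
  assumes "\<And>z. c * z = z * c"
  shows "inverse c * z = z * inverse c"
proof (cases "c = 0")
  case False
  have "inverse c * z = inverse c * z * (c * inverse c)" using False by simp
  also have "\<dots> = inverse c * (c * z) * inverse c" using assms by (simp add: mult.assoc)
  also have "\<dots> = z * inverse c" using False by (simp add: mult.assoc[symmetric])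
  finally show ?thesis .
qed simp

lemma central_powi:
  fixes c :: "'a::division_ring"
  assumes "\<And>z. c * z = z * c"
  shows "c powi i * z = z * c powi i"
  unfolding power_int_def using central_pow[OF assms] central_pow[OF central_inv[OF assms]] by auto

lemma comm_pow:
  fixes x y c :: "'a::division_ring"
  assumes yx: "y * x = c * (x * y)" and cc: "\<And>z. c * z = z * c"
  shows "y * x ^ n = c ^ n * (x ^ n * y)"
proof (induction n)
  case (Suc n)
  have "y * x ^ Suc n = (y * x^n) * x" by (simp only: power_Suc2 mult.assoc)
  also have "\<dots> = c^n * x^n * (y * x)" using Suc by (simp add: mult.assoc)
  also have "\<dots> = c^n * x^n * c * (x * y)" using yx by (simp add: mult.assoc)
  also have "\<dots> = c^n * (x^n * c) * (x * y)" by (simp only: mult.assoc)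
  also have "\<dots> = c^n * (c * x^n) * (x * y)" by (simp only: central_pow[OF cc, of n] cc)
  also have "\<dots> = c^n * c * (x^n * x * y)" by (simp only: mult.assoc)
  also have "\<dots> = c ^ Suc n * (x ^ Suc n * y)" by (simp only: power_Suc2 mult.assoc)
  finally show ?case .
qed simp

lemma comm_inv:
  fixes x y c :: "'a::division_ring"
  assumes yx: "y * x = c * (x * y)" and cc: "\<And>z. c * z = z * c" and x0: "x \<noteq> 0"
  shows "y * inverse x = inverse c * (inverse x * y)"
proof (cases "c = 0")
  case True
  then have "y * x = 0" using yx by simp
  then have "y = 0" using x0 by simp
  then show ?thesis by simp
next
  case False
  have e1: "inverse x * y = inverse x * (y * x) * inverse x" using x0 by (simp add: mult.assoc)
  have e2: "inverse x * c * x = c"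
  proof -
    have "inverse x * c * x = c * inverse x * x" using cc[of "inverse x"] by simp
    also have "\<dots> = c" using x0 by (simp add: mult.assoc)
    finally show ?thesis .
  qed
  have "inverse x * (y * x) * inverse x = (inverse x * c * x) * (y * inverse x)"
    using yx by (simp add: mult.assoc)
  with e1 e2 have "inverse x * y = c * (y * inverse x)" by simp
  then have "inverse c * (inverse x * y) = inverse c * c * (y * inverse x)" by (simp add: mult.assoc)
  then show ?thesis using False by simp
qed

lemma comm_powi:
  fixes x y c :: "'a::division_ring"
  assumes yx: "y * x = c * (x * y)" and cc: "\<And>z. c * z = z * c" and x0: "x \<noteq> 0"
  shows "y * x powi a = c powi a * (x powi a * y)"
proof (cases "a \<ge> 0")
  case True
  have e: "x powi a = x ^ nat a" "c powi a = c ^ nat a" using True by (simp_all add: power_int_def)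
  show ?thesis unfolding e by (rule comm_pow[OF yx cc])
next
  case False
  have e: "x powi a = inverse x ^ nat (-a)" "c powi a = inverse c ^ nat (-a)"
    using False by (simp_all add: power_int_def)
  have i1: "y * inverse x = inverse c * (inverse x * y)" by (rule comm_inv[OF yx cc x0])
  have i2: "\<And>z. inverse c * z = z * inverse c" by (rule central_inv[OF cc])
  have "y * inverse x ^ nat (-a) = inverse c ^ nat (-a) * (inverse x ^ nat (-a) * y)"
    by (rule comm_pow[of y "inverse x" "inverse c", OF i1 i2])
  then show ?thesis unfolding e .
qed

lemma comm_powi2:
  fixes x y c :: "'a::division_ring"
  assumes yx: "y * x = c * (x * y)" and cc: "\<And>z. c * z = z * c" and x0: "x \<noteq> 0"
    and y0: "y \<noteq> 0" and c0: "c \<noteq> 0"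
  shows "y powi b * x powi a = c powi (a * b) * (x powi a * y powi b)"
proof -
  let ?X = "x powi a" and ?C = "c powi a"
  have h1: "y * ?X = ?C * (?X * y)" by (rule comm_powi[OF yx cc x0])
  have C0: "?C \<noteq> 0" using c0 by (simp only: power_int_eq_0_iff) simp
  have Cc: "\<And>z. ?C * z = z * ?C" by (rule central_powi[OF cc])
  have h2: "?X * y = inverse ?C * (y * ?X)"
    by (simp only: h1 mult.assoc[symmetric] left_inverse[OF C0] mult_1_left)
  have h3: "?X * y powi b = inverse ?C powi b * (y powi b * ?X)"
    by (rule comm_powi[OF h2 central_inv[OF Cc] y0])
  have E1: "?C powi b * (?X * y powi b) = (?C powi b * inverse ?C powi b) * (y powi b * ?X)"
    unfolding h3 by (simp only: mult.assoc)
  have E2: "?C powi b * inverse ?C powi b = 1"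
    unfolding power_int_inverse by (rule right_inverse) (simp add: c0)
  have A: "?C powi b * (?X * y powi b) = y powi b * ?X" unfolding E1 E2 by (rule mult_1_left)
  have B: "c powi (a*b) = ?C powi b" by (rule power_int_mult)
  show ?thesis by (simp only: B A)
qed



locale qt =
  fixes Q X1 X2 :: "'a::division_ring"
  assumes Qc: "\<And>y. Q * y = y * Q"
  and comm12: "X1 * X2 = Q^2 * (X2 * X1)"
  and ind: "\<And>g. finite {p. g p \<noteq> 0} \<Longrightarrow>
        (\<Sum>(i, a, b)\<in>{p. g p \<noteq> 0}. of_int (g (i, a, b)) * Q powi i * X1 powi a * X2 powi b) = 0
        \<Longrightarrow> (\<forall>p. g p = 0)"
begin

definition mono :: "int \<Rightarrow> int \<Rightarrow> int \<Rightarrow> 'a" where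
  "mono i a b = Q powi i * X1 powi a * X2 powi b"

lemma mono_ne0: "mono i a b \<noteq> 0"
proof
  assume h: "mono i a b = 0"
  define g where "g = (\<lambda>p. if p = (i,a,b) then (1::int) else 0)"
  have S: "{p. g p \<noteq> 0} = {(i,a,b)}" by (auto simp: g_def)
  have "(\<Sum>(i', a', b')\<in>{p. g p \<noteq> 0}. of_int (g (i', a', b')) * Q powi i' * X1 powi a' * X2 powi b') = 0"
    unfolding S using h by (simp add: mono_def g_def)
  from ind[OF _ this] have "g (i,a,b) = 0" unfolding S by simp
  then show False by (simp add: g_def)
qed

lemma Q0: "Q \<noteq> 0" using mono_ne0[of 1 0 0] by (simp add: mono_def)
lemma X10: "X1 \<noteq> 0" using mono_ne0[of 0 1 0] by (simp add: mono_def)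
lemma X20: "X2 \<noteq> 0" using mono_ne0[of 0 0 1] by (simp add: mono_def)

lemma Qpc: "Q powi i * y = y * Q powi i" by (rule central_powi[OF Qc])
lemma Qpc2: "x * (Q powi j * y) = Q powi j * (x * y)"
  by (simp only: mult.assoc[symmetric] Qpc[of j x])

lemma Qadd: "Q powi (m + n) = Q powi m * Q powi n" using Q0 by (simp add: power_int_add)
lemma X1add: "X1 powi (m + n) = X1 powi m * X1 powi n" using X10 by (simp add: power_int_add)
lemma X2add: "X2 powi (m + n) = X2 powi m * X2 powi n" using X20 by (simp add: power_int_add)

lemma comm21: "X2 * X1 = Q powi (-2) * (X1 * X2)"
proof -
  have Q2: "Q^2 \<noteq> 0" using Q0 by simp
  have "Q powi (-2) * (X1 * X2) = inverse (Q^2) * Q^2 * (X2 * X1)"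
    by (simp only: comm12 power_int_minus power_int_numeral mult.assoc)
  also have "inverse (Q^2) * Q^2 = 1" using Q2 by (rule left_inverse)
  finally show ?thesis by simp
qed

lemma swap: "X2 powi b * X1 powi a = Q powi (-2*a*b) * (X1 powi a * X2 powi b)"
proof -
  have c0: "Q powi (-2) \<noteq> 0" using Q0 by simp
  have "X2 powi b * X1 powi a = (Q powi (-2)) powi (a*b) * (X1 powi a * X2 powi b)"
    by (rule comm_powi2[OF comm21 Qpc X10 X20 c0])
  also have "(Q powi (-2)) powi (a*b) = Q powi (-2*a*b)"
    by (simp only: power_int_mult[symmetric] mult.assoc)
  finally show ?thesis .
qed

lemma mono_mult: "mono i a b * mono j c d = mono (i + j - 2*b*c) (a+c) (b+d)"
proof -
  have "mono i a b * mono j c d = Q powi i * (X1 powi a * (X2 powi b * (Q powi j * (X1 powi c * X2 powi d))))"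
    by (simp only: mono_def mult.assoc)
  also have "\<dots> = Q powi i * (Q powi j * (X1 powi a * ((X2 powi b * X1 powi c) * X2 powi d)))"
    by (simp only: Qpc2[of "X2 powi b" j] Qpc2[of "X1 powi a" j] mult.assoc)
  also have "\<dots> = Q powi i * (Q powi j * (X1 powi a * (Q powi (-2*c*b) * (X1 powi c * X2 powi b) * X2 powi d)))"
    by (simp only: swap)
  also have "\<dots> = (Q powi i * Q powi j * Q powi (-2*c*b)) * (X1 powi a * X1 powi c) * (X2 powi b * X2 powi d)"
    by (simp only: Qpc2[of "X1 powi a" "-2*(c*b)"] mult.assoc)
  also have "\<dots> = Q powi (i + j + (-2*c*b)) * X1 powi (a+c) * X2 powi (b+d)"
    by (simp only: Qadd X1add X2add)
  also have "i + j + (-2*c*b) = i + j - 2*b*c" by simp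
  finally show ?thesis by (simp only: mono_def)
qed


inductive_set spn :: "(int \<times> int) set \<Rightarrow> 'a set" for A where
  spn0: "0 \<in> spn A"
| spnI: "x \<in> spn A \<Longrightarrow> (a,b) \<in> A \<Longrightarrow> x + of_int n * mono i a b \<in> spn A"

lemma spn_monoI: "(a,b) \<in> A \<Longrightarrow> mono i a b \<in> spn A"
  using spnI[OF spn0, of a b A 1 i] by simp

lemma spn_subset: "x \<in> spn A \<Longrightarrow> A \<subseteq> B \<Longrightarrow> x \<in> spn B"
  by (induction rule: spn.induct) (auto intro: spn.intros)

lemma spn_add: assumes "x \<in> spn A" "y \<in> spn A" shows "x + y \<in> spn A"
  using assms(2)
proof (induction y rule: spn.induct)
  case spn0 then show ?case using assms(1) by simp
next
  case (spnI y a b n i)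
  have "x + y + of_int n * mono i a b \<in> spn A" using spnI assms(1) by (intro spn.spnI) auto
  then show ?case by (simp only: add.assoc)
qed

lemma spn_smult: "x \<in> spn A \<Longrightarrow> of_int n * x \<in> spn A"
proof (induction x rule: spn.induct)
  case spn0 then show ?case by (simp add: spn.spn0)
next
  case (spnI x a b m i)
  have "of_int n * x + of_int (n*m) * mono i a b \<in> spn A" using spnI by (intro spn.spnI) auto
  then show ?case by (simp only: distrib_left of_int_mult mult.assoc)
qed

lemma spn_neg: "x \<in> spn A \<Longrightarrow> - x \<in> spn A"
  using spn_smult[of x A "-1"] by simp

lemma spn_diff: "x \<in> spn A \<Longrightarrow> y \<in> spn A \<Longrightarrow> x - y \<in> spn A"
  using spn_add[OF _ spn_neg] by (simp only: diff_conv_add_uminus)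

lemma spn_sum: "finite S \<Longrightarrow> (\<And>s. s \<in> S \<Longrightarrow> f s \<in> spn A) \<Longrightarrow> sum f S \<in> spn A"
  by (induction S rule: finite_induct) (auto intro: spn_add spn0)

lemma spn_mono_mult:
  "y \<in> spn B \<Longrightarrow> (\<And>c d. (c,d) \<in> B \<Longrightarrow> (a+c, b+d) \<in> C) \<Longrightarrow> mono i a b * y \<in> spn C"
proof (induction y rule: spn.induct)
  case spn0 then show ?case by (simp add: spn.spn0)
next
  case (spnI y c d n j)
  have e: "mono i a b * (y + of_int n * mono j c d)
      = mono i a b * y + of_int n * mono (i + j - 2*b*c) (a+c) (b+d)"
  proof -
    have "mono i a b * (of_int n * mono j c d) = (mono i a b * of_int n) * mono j c d"
      by (simp only: mult.assoc)
    also have "\<dots> = of_int n * (mono i a b * mono j c d)"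
      by (simp only: mult_of_int_commute[of n "mono i a b", symmetric] mult.assoc)
    finally show ?thesis by (simp only: distrib_left mono_mult)
  qed
  show ?case unfolding e using spnI by (intro spn.spnI) auto
qed

lemma spn_mult:
  "x \<in> spn A \<Longrightarrow> y \<in> spn B \<Longrightarrow> (\<And>a b c d. (a,b) \<in> A \<Longrightarrow> (c,d) \<in> B \<Longrightarrow> (a+c, b+d) \<in> C)
    \<Longrightarrow> x * y \<in> spn C"
proof (induction x rule: spn.induct)
  case spn0 then show ?case by (simp add: spn.spn0)
next
  case (spnI x a b n i)
  have e: "(x + of_int n * mono i a b) * y = x * y + of_int n * (mono i a b * y)"
    by (simp only: distrib_right mult.assoc)
  show ?case unfolding e using spnI
    by (intro spn_add spn_smult spn_mono_mult[of y B]) auto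
qed

definition monop :: "int \<times> int \<times> int \<Rightarrow> 'a" where
  "monop p = mono (fst p) (fst (snd p)) (snd (snd p))"

lemma spn_rep: "x \<in> spn A \<Longrightarrow> \<exists>S f. finite S \<and> (\<forall>p. f p \<noteq> 0 \<longrightarrow> p \<in> S)
   \<and> (\<forall>i a b. f (i,a,b) \<noteq> 0 \<longrightarrow> (a,b) \<in> A) \<and> x = (\<Sum>p\<in>S. of_int (f p) * monop p)"
proof (induction x rule: spn.induct)
  case spn0
  show ?case by (rule exI[of _ "{}"], rule exI[of _ "\<lambda>_. 0"]) simp
next
  case (spnI x a b n i)
  then obtain S f where S: "finite S" "\<forall>p. f p \<noteq> 0 \<longrightarrow> p \<in> S"
    "\<forall>i a b. f (i,a,b) \<noteq> 0 \<longrightarrow> (a,b) \<in> A" "x = (\<Sum>p\<in>S. of_int (f p) * monop p)" by blast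
  define p0 where "p0 = (i,a,b)"
  define f' where "f' = (\<lambda>p. f p + (if p = p0 then n else 0))"
  define S' where "S' = insert p0 S"
  have fin: "finite S'" using S by (simp add: S'_def)
  have "(\<Sum>p\<in>S'. of_int (f' p) * monop p)
      = (\<Sum>p\<in>S'. of_int (f p) * monop p) + (\<Sum>p\<in>S'. (if p = p0 then of_int n * monop p else 0))"
  proof -
    have "\<And>p. of_int (f' p) * monop p = of_int (f p) * monop p + (if p = p0 then of_int n * monop p else 0)"
      by (simp add: f'_def distrib_right)
    then show ?thesis by (simp only: sum.distrib)
  qed
  also have "(\<Sum>p\<in>S'. (if p = p0 then of_int n * monop p else 0)) = of_int n * monop p0"
    using fin by (simp add: S'_def)
  also have "(\<Sum>p\<in>S'. of_int (f p) * monop p) = (\<Sum>p\<in>S. of_int (f p) * monop p)"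
  proof (cases "p0 \<in> S")
    case True then show ?thesis by (simp add: S'_def insert_absorb)
  next
    case False
    then have "f p0 = 0" using S(2) by blast
    then show ?thesis using False S(1) by (simp add: S'_def)
  qed
  finally have "x + of_int n * mono i a b = (\<Sum>p\<in>S'. of_int (f' p) * monop p)"
    using S(4) by (simp add: p0_def monop_def)
  moreover have "\<forall>p. f' p \<noteq> 0 \<longrightarrow> p \<in> S'" using S(2) by (auto simp: f'_def S'_def)
  moreover have "\<forall>i a b. f' (i,a,b) \<noteq> 0 \<longrightarrow> (a,b) \<in> A"
    using S(3) spnI(2) by (auto simp: f'_def p0_def split: if_splits)
  ultimately show ?case using fin by blast
qed

lemma indep: "finite S \<Longrightarrow> (\<forall>p. f p \<noteq> 0 \<longrightarrow> p \<in> S) \<Longrightarrow> (\<Sum>p\<in>S. of_int (f p) * monop p) = 0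
   \<Longrightarrow> f p = 0"
proof -
  assume fin: "finite S" and sub: "\<forall>p. f p \<noteq> 0 \<longrightarrow> p \<in> S" and z: "(\<Sum>p\<in>S. of_int (f p) * monop p) = 0"
  have "{p. f p \<noteq> 0} \<subseteq> S" using sub by blast
  then have fin2: "finite {p. f p \<noteq> 0}" using fin by (rule finite_subset)
  have "(\<Sum>(i, a, b)\<in>{p. f p \<noteq> 0}. of_int (f (i, a, b)) * Q powi i * X1 powi a * X2 powi b)
     = (\<Sum>p\<in>{p. f p \<noteq> 0}. of_int (f p) * monop p)"
  proof (rule sum.cong)
    fix p :: "int \<times> int \<times> int"
    obtain i a b where p: "p = (i,a,b)" by (cases p) auto
    show "(case p of (i, a, b) \<Rightarrow> of_int (f (i, a, b)) * Q powi i * X1 powi a * X2 powi b) =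
          of_int (f p) * monop p"
      unfolding p by (simp only: monop_def mono_def mult.assoc prod.case fst_conv snd_conv)
  qed simp
  also have "\<dots> = (\<Sum>p\<in>S. of_int (f p) * monop p)"
    by (rule sum.mono_neutral_left) (use fin sub in auto)
  finally have "(\<Sum>(i, a, b)\<in>{p. f p \<noteq> 0}. of_int (f (i, a, b)) * Q powi i * X1 powi a * X2 powi b) = 0"
    using z by simp
  from ind[OF fin2 this] show "f p = 0" by blast
qed

lemma sep0:
  assumes fin: "finite J" and z: "(\<Sum>j\<in>J. of_int (h j) * mono j c d) \<in> spn A"
    and nA: "(c,d) \<notin> A" and jJ: "j \<in> J"
  shows "h j = 0"
proof -
  let ?z = "(\<Sum>j\<in>J. of_int (h j) * mono j c d)"
  obtain S f where S: "finite S" "\<forall>p. f p \<noteq> 0 \<longrightarrow> p \<in> S"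
    "\<forall>i a b. f (i,a,b) \<noteq> 0 \<longrightarrow> (a,b) \<in> A" "?z = (\<Sum>p\<in>S. of_int (f p) * monop p)"
    using spn_rep[OF z] by blast
  define G where "G = (\<lambda>p. if snd p = (c,d) \<and> fst p \<in> J then h (fst p) else 0)"
  define F where "F = (\<lambda>p. G p - f p)"
  define T where "T = S \<union> (\<lambda>j. (j,c,d)) ` J"
  have finT: "finite T" using S(1) fin by (simp add: T_def)
  have sG: "(\<Sum>p\<in>T. of_int (G p) * monop p) = ?z"
  proof -
    have "(\<Sum>p\<in>T. of_int (G p) * monop p) = (\<Sum>p\<in>(\<lambda>j. (j,c,d)) ` J. of_int (G p) * monop p)"
      by (rule sum.mono_neutral_right) (use finT in \<open>auto simp: T_def G_def\<close>)
    also have "\<dots> = (\<Sum>j\<in>J. of_int (G (j,c,d)) * monop (j,c,d))"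
      by (subst sum.reindex) (auto intro: inj_onI)
    also have "\<dots> = ?z" by (rule sum.cong) (auto simp: G_def monop_def)
    finally show ?thesis .
  qed
  have sf: "(\<Sum>p\<in>T. of_int (f p) * monop p) = ?z"
  proof -
    have "(\<Sum>p\<in>T. of_int (f p) * monop p) = (\<Sum>p\<in>S. of_int (f p) * monop p)"
    proof (rule sum.mono_neutral_right)
      have "\<And>p. p \<notin> S \<Longrightarrow> f p = 0" using S(2) by blast
      then show "\<forall>p\<in>T - S. of_int (f p) * monop p = 0" by simp
    qed (use finT in \<open>auto simp: T_def\<close>)
    then show ?thesis using S(4) by simp
  qed
  have "(\<Sum>p\<in>T. of_int (F p) * monop p) = 0"
    unfolding F_def by (simp add: left_diff_distrib sum_subtractf sG sf)
  moreover have "\<forall>p. F p \<noteq> 0 \<longrightarrow> p \<in> T" using S(2) by (auto simp: F_def G_def T_def)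
  ultimately have "F (j,c,d) = 0" using finT indep by blast
  moreover have "f (j,c,d) = 0" using S(3) nA by blast
  ultimately show ?thesis using jJ by (simp add: F_def G_def)
qed

lemma sep:
  assumes fin: "finite I" and inj: "inj_on e I"
    and z: "(\<Sum>i\<in>I. of_int (h i) * mono (e i) c d) \<in> spn A"
    and nA: "(c,d) \<notin> A" and iI: "i \<in> I"
  shows "h i = 0"
proof -
  define h' where "h' = (\<lambda>j. h (inv_into I e j))"
  have "(\<Sum>j\<in>e ` I. of_int (h' j) * mono j c d) = (\<Sum>i\<in>I. of_int (h' (e i)) * mono (e i) c d)"
    by (rule sum.reindex[OF inj, unfolded comp_def])
  also have "\<dots> = (\<Sum>i\<in>I. of_int (h i) * mono (e i) c d)"
    by (rule sum.cong) (auto simp: h'_def inv_into_f_f[OF inj])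
  finally have "h' (e i) = 0" using sep0[of "e ` I" h' c d A "e i"] fin z nA iI by simp
  then show ?thesis by (simp add: h'_def inv_into_f_f[OF inj iI])
qed

end


locale qtx = qt Q "X 1" "X 2" for Q :: "'a::division_ring" and X :: "int \<Rightarrow> 'a" +
  assumes r1: "X 0 * X 2 = Q * X 1 + 1"
    and r2: "X 1 * X 3 = Q^4 * X 2^4 + 1"
    and r3: "X 2 * X 4 = Q * X 3 + 1"
begin

lemma mono000: "mono 0 0 0 = 1" by (simp add: mono_def)
lemma monoQ: "mono j 0 0 = Q powi j" by (simp add: mono_def)
lemma monoX1: "mono 0 1 0 = X 1" by (simp add: mono_def)
lemma monoX2: "mono 0 0 1 = X 2" by (simp add: mono_def)
lemma monoY: "mono 0 0 (-1) = inverse (X 2)" by (simp add: mono_def)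

lemma X3e: "X 3 = mono 4 (-1) 4 + mono 0 (-1) 0"
proof -
  have "X 3 = inverse (X 1) * (X 1 * X 3)" using X10 by (simp add: mult.assoc[symmetric])
  also have "\<dots> = inverse (X 1) * (Q^4 * X 2^4) + inverse (X 1)" by (simp only: r2 distrib_left mult_1_right)
  also have "inverse (X 1) * (Q^4 * X 2^4) = Q powi 4 * inverse (X 1) * X 2 powi 4"
    using Qpc[of 4 "inverse (X 1)"] by (simp add: mult.assoc[symmetric])
  finally show ?thesis by (simp add: mono_def)
qed

lemma X0e: "X 0 = mono 1 1 (-1) + mono 0 0 (-1)"
proof -
  have "X 0 = (X 0 * X 2) * inverse (X 2)" using X20 by (simp add: mult.assoc)
  also have "\<dots> = Q * X 1 * inverse (X 2) + inverse (X 2)" by (simp only: r1 distrib_right mult_1_left)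
  finally show ?thesis by (simp add: mono_def)
qed

lemma X4e: "X 4 = mono 0 0 (-1) * (mono 1 0 0 * X 3) + mono 0 0 (-1)"
proof -
  have "X 4 = inverse (X 2) * (X 2 * X 4)" using X20 by (simp add: mult.assoc[symmetric])
  also have "\<dots> = inverse (X 2) * (Q * X 3) + inverse (X 2)" by (simp only: r3 distrib_left mult_1_right)
  finally show ?thesis by (simp add: mono_def)
qed

definition LT :: "int \<Rightarrow> 'a \<Rightarrow> int \<Rightarrow> int \<Rightarrow> int \<Rightarrow> bool" where
  "LT s x u d w \<longleftrightarrow> s*u \<le> s*w \<and>
     (\<exists>k. x - mono k u d \<in> spn {(e1,e2). (e1 = u \<and> d < e2) \<or> (s*u < s*e1 \<and> s*e1 \<le> s*w)})"

lemma LT_spn: "LT s x u d w \<Longrightarrow> x \<in> spn {(e1,e2). (e1 = u \<and> d \<le> e2) \<or> (s*u < s*e1 \<and> s*e1 \<le> s*w)}"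
proof -
  assume "LT s x u d w"
  then obtain k where k: "x - mono k u d \<in> spn {(e1,e2). (e1 = u \<and> d < e2) \<or> (s*u < s*e1 \<and> s*e1 \<le> s*w)}"
    unfolding LT_def by blast
  have "mono k u d + (x - mono k u d) \<in> spn {(e1,e2). (e1 = u \<and> d \<le> e2) \<or> (s*u < s*e1 \<and> s*e1 \<le> s*w)}"
    by (rule spn_add[OF spn_monoI spn_subset[OF k]]) auto
  then show ?thesis by simp
qed

lemma LT_mult:
  assumes s: "s = 1 \<or> s = -1" and L1: "LT s x u d w" and L2: "LT s x' u' d' w'"
  shows "LT s (x * x') (u+u') (d+d') (w+w')"
proof -
  let ?R = "\<lambda>u d w. spn {(e1,e2). (e1 = u \<and> d < e2) \<or> (s*u < s*e1 \<and> s*e1 \<le> s*w)}"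
  obtain k where k: "x - mono k u d \<in> ?R u d w" and sw: "s*u \<le> s*w" using L1 unfolding LT_def by blast
  obtain k' where k': "x' - mono k' u' d' \<in> ?R u' d' w'" and sw': "s*u' \<le> s*w'" using L2 unfolding LT_def by blast
  define m where "m = mono k u d"
  define m' where "m' = mono k' u' d'"
  define y where "y = x - m"
  define y' where "y' = x' - m'"
  have xe: "x = m + y" and xe': "x' = m' + y'" by (simp_all add: y_def y'_def)
  have mm: "m * m' = mono (k + k' - 2*d*u') (u+u') (d+d')" by (simp add: m_def m'_def mono_mult)
  have e: "x * x' - mono (k + k' - 2*d*u') (u+u') (d+d') = m * y' + y * m' + y * y'"
    unfolding mm[symmetric] xe xe' by (simp add: algebra_simps)
  have m1: "m \<in> spn {(u,d)}" by (simp add: m_def spn_monoI)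
  have m2: "m' \<in> spn {(u',d')}" by (simp add: m'_def spn_monoI)
  have t1: "m * y' \<in> ?R (u+u') (d+d') (w+w')" unfolding m_def
    by (rule spn_mono_mult[OF k'[folded m'_def y'_def]]) (use s sw in auto)
  have t2: "y * m' \<in> ?R (u+u') (d+d') (w+w')"
    by (rule spn_mult[OF k[folded m_def y_def] m2]) (use s sw' in auto)
  have t3: "y * y' \<in> ?R (u+u') (d+d') (w+w')"
    by (rule spn_mult[OF k[folded m_def y_def] k'[folded m'_def y'_def]]) (use s sw sw' in auto)
  have "x * x' - mono (k + k' - 2*d*u') (u+u') (d+d') \<in> ?R (u+u') (d+d') (w+w')"
    unfolding e by (intro spn_add t1 t2 t3)
  moreover have "s*(u+u') \<le> s*(w+w')" using s sw sw' by auto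
  ultimately show ?thesis unfolding LT_def by blast
qed

lemma LT_cong: "LT s x u d w \<Longrightarrow> u = u' \<Longrightarrow> d = d' \<Longrightarrow> w = w' \<Longrightarrow> LT s x u' d' w'" by simp

lemma LT_one: "LT s 1 0 0 0"
  unfolding LT_def by (rule conjI, simp, rule exI[of _ 0]) (simp add: mono000 spn.spn0)

lemma LT_pow:
  assumes s: "s = 1 \<or> s = -1" and L: "LT s x u d w"
  shows "LT s (x ^ n) (int n * u) (int n * d) (int n * w)"
proof (induction n)
  case 0 then show ?case using LT_one by simp
next
  case (Suc n)
  have h: "LT s (x * x ^ n) (u + int n * u) (d + int n * d) (w + int n * w)"
    by (rule LT_mult[OF s L Suc])
  have eq: "x ^ Suc n = x * x ^ n" by simp
  show ?case unfolding eq by (rule LT_cong[OF h]) (simp_all add: algebra_simps)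
qed

lemma LT_Q: "LT s (Q powi j) 0 0 0"
  unfolding LT_def by (rule conjI, simp, rule exI[of _ j]) (simp add: monoQ spn.spn0)
lemma LT_X1: "LT s (X 1) 1 0 1"
  unfolding LT_def by (rule conjI, simp, rule exI[of _ 0]) (simp add: monoX1 spn.spn0)
lemma LT_X2: "LT s (X 2) 0 1 0"
  unfolding LT_def by (rule conjI, simp, rule exI[of _ 0]) (simp add: monoX2 spn.spn0)
lemma LT_X3: "LT s (X 3) (-1) 0 (-1)"
  unfolding LT_def by (rule conjI, simp, rule exI[of _ 0]) (simp add: X3e spn_monoI)
lemma LT1_X0: "LT 1 (X 0) 0 (-1) 1"
  unfolding LT_def by (rule conjI, simp, rule exI[of _ 0]) (simp add: X0e spn_monoI)
lemma LT2_X0: "LT (-1) (X 0) 1 (-1) 0"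
  unfolding LT_def by (rule conjI, simp, rule exI[of _ 1]) (simp add: X0e spn_monoI)

lemma posp_int: "int (posp x) = max x 0" by (simp add: posp_def)

lemma LT_stdmon:
  assumes s: "s = 1 \<or> s = -1" and L0: "LT s (X 0) u0 (-1) w0"
  shows "LT s (stdmon Q X c d)
     (- int (posp (-c)) + int (posp c) + int (posp (-d)) * u0) (int (posp d) - int (posp (-d)))
     (- int (posp (-c)) + int (posp c) + int (posp (-d)) * w0)"
proof -
  have "LT s (Q powi (- (c * d)) * X 3 ^ posp (- c) * X 1 ^ posp c * X 2 ^ posp d * X 0 ^ posp (- d))
    (0 + int (posp (-c)) * (-1) + int (posp c) * 1 + int (posp d) * 0 + int (posp (-d)) * u0)
    (0 + int (posp (-c)) * 0 + int (posp c) * 0 + int (posp d) * 1 + int (posp (-d)) * (-1))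
    (0 + int (posp (-c)) * (-1) + int (posp c) * 1 + int (posp d) * 0 + int (posp (-d)) * w0)"
    by (intro LT_mult[OF s] LT_pow[OF s] LT_Q LT_X1 LT_X2 LT_X3 L0)
  then show ?thesis unfolding stdmon_def by (rule LT_cong) (simp_all add: algebra_simps)
qed

lemma LT1_stdmon: "LT 1 (stdmon Q X c d) c d (c + int (posp (-d)))"
  by (rule LT_cong[OF LT_stdmon[OF _ LT1_X0]]) (auto simp: posp_int)

lemma LT2_stdmon: "LT (-1) (stdmon Q X c d) (c + int (posp (-d))) d c"
  by (rule LT_cong[OF LT_stdmon[OF _ LT2_X0]]) (auto simp: posp_int)


definition LP :: "'a \<Rightarrow> 'a \<Rightarrow> int \<Rightarrow> int \<Rightarrow> bool" where
  "LP x w lo hi \<longleftrightarrow> lo \<le> hi \<and> w \<in> spn {(e1,e2). e1 = lo} \<and> x - w \<in> spn {(e1,e2). lo < e1 \<and> e1 \<le> hi}"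

lemma LP_spn: "LP x w lo hi \<Longrightarrow> x \<in> spn {(e1,e2). lo \<le> e1 \<and> e1 \<le> hi}"
proof -
  assume h: "LP x w lo hi"
  have a: "w \<in> spn {(e1,e2). e1 = lo}" "x - w \<in> spn {(e1,e2). lo < e1 \<and> e1 \<le> hi}" "lo \<le> hi"
    using h unfolding LP_def by auto
  have "w + (x - w) \<in> spn {(e1,e2). lo \<le> e1 \<and> e1 \<le> hi}"
    by (rule spn_add[OF spn_subset[OF a(1)] spn_subset[OF a(2)]]) (use a(3) in auto)
  then show ?thesis by simp
qed

lemma LP_mult:
  assumes L1: "LP x w lo hi" and L2: "LP x' w' lo' hi'"
  shows "LP (x * x') (w * w') (lo+lo') (hi+hi')"
proof -
  have a1: "lo \<le> hi" "w \<in> spn {(e1,e2). e1 = lo}" "x - w \<in> spn {(e1,e2). lo < e1 \<and> e1 \<le> hi}"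
    using L1 unfolding LP_def by auto
  have a2: "lo' \<le> hi'" "w' \<in> spn {(e1,e2). e1 = lo'}" "x' - w' \<in> spn {(e1,e2). lo' < e1 \<and> e1 \<le> hi'}"
    using L2 unfolding LP_def by auto
  have x2: "x' \<in> spn {(e1,e2). lo' \<le> e1 \<and> e1 \<le> hi'}" by (rule LP_spn[OF L2])
  have e: "x * x' - w * w' = (x - w) * x' + w * (x' - w')" by (simp add: algebra_simps)
  have "x * x' - w * w' \<in> spn {(e1,e2). lo + lo' < e1 \<and> e1 \<le> hi + hi'}"
    unfolding e
    by (intro spn_add spn_mult[OF a1(3) x2] spn_mult[OF a1(2) a2(3)]) (use a1 a2 in auto)
  moreover have "w * w' \<in> spn {(e1,e2). e1 = lo + lo'}"
    by (rule spn_mult[OF a1(2) a2(2)]) auto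
  ultimately show ?thesis unfolding LP_def using a1 a2 by auto
qed

lemma LP_cong: "LP x w lo hi \<Longrightarrow> lo = lo' \<Longrightarrow> hi = hi' \<Longrightarrow> LP x w lo' hi'" by simp

lemma LP_self: "x \<in> spn {(e1,e2). e1 = lo} \<Longrightarrow> LP x x lo lo"
  unfolding LP_def by (simp add: spn.spn0)

lemma LP_one: "LP 1 1 0 0"
  by (rule LP_self) (simp add: mono000[symmetric] spn_monoI)

lemma LP_pow:
  assumes L: "LP x w lo hi"
  shows "LP (x ^ n) (w ^ n) (int n * lo) (int n * hi)"
proof (induction n)
  case 0 then show ?case using LP_one by simp
next
  case (Suc n)
  have h: "LP (x * x ^ n) (w * w ^ n) (lo + int n * lo) (hi + int n * hi)"
    by (rule LP_mult[OF L Suc])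
  have eq: "x ^ Suc n = x * x ^ n" "w ^ Suc n = w * w ^ n" by simp_all
  show ?case unfolding eq by (rule LP_cong[OF h]) (simp_all add: algebra_simps)
qed

lemma LP_Q: "LP (Q powi j) (Q powi j) 0 0"
proof (rule LP_self)
  have "mono j 0 0 \<in> spn {(e1,e2). e1 = 0}" by (rule spn_monoI) simp
  then show "Q powi j \<in> spn {(e1,e2). e1 = 0}" by (simp only: monoQ)
qed
lemma LP_X1: "LP (X 1) (X 1) 1 1"
proof (rule LP_self)
  have "mono 0 1 0 \<in> spn {(e1,e2). e1 = 1}" by (rule spn_monoI) simp
  then show "X 1 \<in> spn {(e1,e2). e1 = 1}" by (simp only: monoX1)
qed
lemma LP_X2: "LP (X 2) (X 2) 0 0"
proof (rule LP_self)
  have "mono 0 0 1 \<in> spn {(e1,e2). e1 = 0}" by (rule spn_monoI) simp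
  then show "X 2 \<in> spn {(e1,e2). e1 = 0}" by (simp only: monoX2)
qed
lemma X3_spn: "X 3 \<in> spn {(e1,e2). e1 = -1}"
  unfolding X3e by (intro spn_add spn_monoI) auto
lemma LP_X3: "LP (X 3) (X 3) (-1) (-1)"
  by (rule LP_self[OF X3_spn])
lemma LP_X0: "LP (X 0) (mono 0 0 (-1)) 0 1"
  unfolding LP_def X0e by (auto intro: spn_monoI)
lemma LP_X4: "LP (X 4) (mono 0 0 (-1) * (mono 1 0 0 * X 3)) (-1) 0"
proof -
  have "mono 0 0 (-1) * (mono 1 0 0 * X 3) \<in> spn {(e1,e2). e1 = -1}"
  proof -
    have "mono 1 0 0 * X 3 \<in> spn {(e1,e2). e1 = -1}"
      by (rule spn_mono_mult[OF X3_spn]) auto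
    then show ?thesis by (rule spn_mono_mult) auto
  qed
  moreover have "X 4 - mono 0 0 (-1) * (mono 1 0 0 * X 3) \<in> spn {(e1,e2). -1 < e1 \<and> e1 \<le> 0}"
    unfolding X4e by (simp add: spn_monoI)
  ultimately show ?thesis unfolding LP_def by simp
qed

lemma LP_stdmon: "LP (stdmon Q X c d)
   (Q powi (- (c * d)) * X 3 ^ posp (- c) * X 1 ^ posp c * X 2 ^ posp d * mono 0 0 (-1) ^ posp (- d))
   c (c + int (posp (-d)))"
proof -
  have "LP (Q powi (- (c * d)) * X 3 ^ posp (- c) * X 1 ^ posp c * X 2 ^ posp d * X 0 ^ posp (- d))
   (Q powi (- (c * d)) * X 3 ^ posp (- c) * X 1 ^ posp c * X 2 ^ posp d * mono 0 0 (-1) ^ posp (- d))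
    (0 + int (posp (-c)) * (-1) + int (posp c) * 1 + int (posp d) * 0 + int (posp (-d)) * 0)
    (0 + int (posp (-c)) * (-1) + int (posp c) * 1 + int (posp d) * 0 + int (posp (-d)) * 1)"
    by (intro LP_mult LP_pow LP_Q LP_X1 LP_X2 LP_X3 LP_X0)
  then show ?thesis unfolding stdmon_def by (rule LP_cong) (auto simp: posp_int)
qed

lemma YX3: "mono 0 0 (-1) * X 3 = Q powi (-2) * (X 3 * mono 0 0 (-1))"
  by (simp add: X3e distrib_left distrib_right mono_mult monoQ[symmetric])

end


context qtx begin

lemma YX3pow: "mono 0 0 (-1) * X 3 ^ k = Q powi (-2 * int k) * (X 3 ^ k * mono 0 0 (-1))"
proof -
  have "mono 0 0 (-1) * X 3 ^ k = (Q powi (-2)) ^ k * (X 3 ^ k * mono 0 0 (-1))"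
    by (rule comm_pow[OF YX3 Qpc])
  also have "(Q powi (-2)) ^ k = Q powi (-2 * int k)" by (rule power_int_power')
  finally show ?thesis .
qed

lemma key_identity:
  fixes m n :: nat
  defines "a \<equiv> - int m" and "b \<equiv> - int n"
  shows "Q powi (- (a - b)) * (mono 0 0 (-1) * (mono 1 0 0 * X 3)) *
     (Q powi (- (a * b)) * X 3 ^ m * X 1 ^ 0 * X 2 ^ 0 * mono 0 0 (-1) ^ n)
   = Q powi (- ((a - 1) * (b - 1))) * X 3 ^ (m + 1) * X 1 ^ 0 * X 2 ^ 0 * mono 0 0 (-1) ^ (n + 1)"
proof -
  let ?Y = "mono 0 0 (-1)" and ?A = "- (a - b)" and ?B = "- (a * b)"
  have "Q powi ?A * (?Y * (mono 1 0 0 * X 3)) * (Q powi ?B * X 3 ^ m * X 1 ^ 0 * X 2 ^ 0 * ?Y ^ n)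
      = Q powi ?A * (?Y * (Q powi 1 * X 3)) * (Q powi ?B * (X 3 ^ m * ?Y ^ n))"
    by (simp only: monoQ power_0 mult_1_right mult.assoc)
  also have "\<dots> = Q powi ?A * (Q powi 1 * (Q powi ?B * ((?Y * X 3 * X 3 ^ m) * ?Y ^ n)))"
    by (simp only: Qpc2[of ?Y 1] Qpc2[of "X 3" ?B] Qpc2[of ?Y ?B] mult.assoc)
  also have "?Y * X 3 * X 3 ^ m = ?Y * X 3 ^ (m + 1)" by (simp add: mult.assoc)
  also have "\<dots> = Q powi (-2 * int (m + 1)) * (X 3 ^ (m + 1) * ?Y)" by (rule YX3pow)
  also have "Q powi ?A * (Q powi 1 * (Q powi ?B * (Q powi (-2 * int (m + 1)) * (X 3 ^ (m + 1) * ?Y) * ?Y ^ n)))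
      = (Q powi ?A * Q powi 1 * Q powi ?B * Q powi (-2 * int (m + 1))) * X 3 ^ (m + 1) * (?Y * ?Y ^ n)"
    by (simp only: mult.assoc)
  also have "Q powi ?A * Q powi 1 * Q powi ?B * Q powi (-2 * int (m + 1)) = Q powi (?A + 1 + ?B + (-2 * int (m + 1)))"
    by (simp only: Qadd)
  also have "?A + 1 + ?B + (-2 * int (m + 1)) = - ((a - 1) * (b - 1))"
    by (simp add: a_def b_def algebra_simps)
  also have "?Y * ?Y ^ n = ?Y ^ (n + 1)" by simp
  finally show ?thesis by simp
qed

lemma posp_simps:
  "x \<le> 0 \<Longrightarrow> posp x = 0" "x \<ge> 0 \<Longrightarrow> int (posp x) = x"
  by (simp_all add: posp_def)

lemma L_bound:
  assumes hb: "b \<le> 0"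
  shows "Q powi (- (a - b)) * X 4 * stdmon Q X a b - stdmon Q X (a - 1) (b - 1)
     \<in> spn {(e1,e2). (if a > 0 then a - 1 else a) \<le> e1 \<and> e1 \<le> a - b}"
proof -
  let ?w1 = "Q powi (- (a - b)) * (mono 0 0 (-1) * (mono 1 0 0 * X 3)) *
     (Q powi (- (a * b)) * X 3 ^ posp (- a) * X 1 ^ posp a * X 2 ^ posp b * mono 0 0 (-1) ^ posp (- b))"
  let ?w2 = "Q powi (- ((a - 1) * (b - 1))) * X 3 ^ posp (- (a - 1)) * X 1 ^ posp (a - 1) * X 2 ^ posp (b - 1)
     * mono 0 0 (-1) ^ posp (- (b - 1))"
  have P1: "LP (Q powi (- (a - b)) * X 4 * stdmon Q X a b) ?w1 (0 + -1 + a) (0 + 0 + (a + int (posp (-b))))"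
    by (intro LP_mult LP_Q LP_X4 LP_stdmon)
  have P2: "LP (stdmon Q X (a - 1) (b - 1)) ?w2 (a - 1) (a - 1 + int (posp (- (b - 1))))"
    by (rule LP_stdmon)
  have pb: "int (posp (-b)) = - b" "int (posp (- (b - 1))) = 1 - b" "int (posp (1 - b)) = 1 - b" using hb by (simp_all add: posp_def)
  show ?thesis
  proof (cases "a > 0")
    case True
    have "Q powi (- (a - b)) * X 4 * stdmon Q X a b - stdmon Q X (a - 1) (b - 1)
       \<in> spn {(e1,e2). a - 1 \<le> e1 \<and> e1 \<le> a - b}"
      by (rule spn_diff[OF spn_subset[OF LP_spn[OF P1]] spn_subset[OF LP_spn[OF P2]]])
        (auto simp: pb)
    then show ?thesis using True by simp
  next
    case False
    define m where "m = nat (- a)"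
    define n where "n = nat (- b)"
    have am: "a = - int m" and bn: "b = - int n" using False hb by (simp_all add: m_def n_def)
    have pp: "posp (- a) = m" "posp a = 0" "posp b = 0" "posp (- b) = n"
       "posp (- (a - 1)) = m + 1" "posp (a - 1) = 0" "posp (b - 1) = 0" "posp (- (b - 1)) = n + 1"
      using False hb by (simp_all add: posp_def m_def n_def)
    have ww: "?w1 = ?w2" unfolding pp unfolding am bn by (rule key_identity)
    have d1: "Q powi (- (a - b)) * X 4 * stdmon Q X a b - ?w1 \<in> spn {(e1,e2). a - 1 < e1 \<and> e1 \<le> a - b}"
      using P1 unfolding LP_def by (simp add: pb)
    have d2: "stdmon Q X (a - 1) (b - 1) - ?w2 \<in> spn {(e1,e2). a - 1 < e1 \<and> e1 \<le> a - b}"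
      using P2 unfolding LP_def by (simp add: pb)
    have "(Q powi (- (a - b)) * X 4 * stdmon Q X a b - ?w1) - (stdmon Q X (a - 1) (b - 1) - ?w2)
       \<in> spn {(e1,e2). a - 1 < e1 \<and> e1 \<le> a - b}" by (rule spn_diff[OF d1 d2])
    then have "Q powi (- (a - b)) * X 4 * stdmon Q X a b - stdmon Q X (a - 1) (b - 1)
       \<in> spn {(e1,e2). a - 1 < e1 \<and> e1 \<le> a - b}" unfolding ww by simp
    then show ?thesis by (rule spn_subset) (use False in auto)
  qed
qed

end


context qt begin

lemma Qmono: "Q powi i * mono k u d = mono (i + k) u d"
proof -
  have "Q powi i = mono i 0 0" by (simp add: mono_def)
  then have "Q powi i * mono k u d = mono i 0 0 * mono k u d" by simp
  also have "\<dots> = mono (i + k) u d" by (simp add: mono_mult)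
  finally show ?thesis .
qed

lemma corner_extract:
  fixes g :: "int \<Rightarrow> int \<Rightarrow> int \<Rightarrow> int" and F :: "int \<Rightarrow> int \<Rightarrow> 'a" and u :: "int \<Rightarrow> int \<Rightarrow> int"
  assumes s: "s = 1 \<or> s = -1"
    and fin: "finite {(c,d,i). g c d i \<noteq> 0}"
    and LTs: "\<And>c d. \<exists>k. F c d - mono k (u c d) d \<in> spn {(e1,e2). (e1 = u c d \<and> d < e2) \<or> s * u c d < s * e1}"
    and inj: "\<And>c c' d. u c d = u c' d \<Longrightarrow> c = c'"
    and eq: "L = (\<Sum>(c,d,i)\<in>{(c,d,i). g c d i \<noteq> 0}. of_int (g c d i) * Q powi i * F c d)"
    and LB: "L \<in> spn B"
    and ne: "g c1 d1 i1 \<noteq> 0"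
  shows "\<exists>c0 d0. (\<exists>i. g c0 d0 i \<noteq> 0) \<and> (u c0 d0, d0) \<in> B \<and>
            (\<forall>c d. (\<exists>i. g c d i \<noteq> 0) \<longrightarrow> s * u c0 d0 \<le> s * u c d)"
proof -
  define S where "S = {(c,d,i). g c d i \<noteq> 0}"
  define P where "P = (\<lambda>(c,d,i). (c,d)) ` S"
  have finS: "finite S" using fin by (simp add: S_def)
  have finP: "finite P" using finS by (simp add: P_def)
  have inP: "\<And>c d. (c,d) \<in> P \<longleftrightarrow> (\<exists>i. g c d i \<noteq> 0)"
    by (auto simp: P_def S_def image_iff)
  define V where "V = (\<lambda>(c,d). s * u c d) ` P"
  have finV: "finite V" using finP by (simp add: V_def)
  have neV: "V \<noteq> {}" using ne inP[of c1 d1] by (auto simp: V_def)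
  define mv where "mv = Min V"
  have mvV: "mv \<in> V" using finV neV by (simp add: mv_def)
  have mvle: "\<And>c d. (c,d) \<in> P \<Longrightarrow> mv \<le> s * u c d"
  proof -
    fix c d assume "(c,d) \<in> P"
    then have "s * u c d \<in> V" unfolding V_def by (rule rev_image_eqI) simp
    then show "mv \<le> s * u c d" unfolding mv_def by (rule Min_le[OF finV])
  qed
  define D where "D = {d. \<exists>c. (c,d) \<in> P \<and> s * u c d = mv}"
  have finD: "finite D"
  proof -
    have "D \<subseteq> snd ` P" by (force simp: D_def)
    then show ?thesis using finite_imageI[OF finP, of snd] by (rule finite_subset)
  qed
  have neD: "D \<noteq> {}"
  proof -
    obtain p where "p \<in> P" "mv = (\<lambda>(c,d). s * u c d) p" using mvV unfolding V_def by blast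
    then have "snd p \<in> D" unfolding D_def by (cases p) auto
    then show ?thesis by blast
  qed
  define d0 where "d0 = Min D"
  have d0D: "d0 \<in> D" using finD neD by (simp add: d0_def)
  then obtain c0 where c0P: "(c0,d0) \<in> P" and c0m: "s * u c0 d0 = mv" by (auto simp: D_def)
  have d0le: "\<And>c d. (c,d) \<in> P \<Longrightarrow> s * u c d = mv \<Longrightarrow> d0 \<le> d"
  proof -
    fix c d assume "(c,d) \<in> P" "s * u c d = mv"
    then have "d \<in> D" unfolding D_def by blast
    then show "d0 \<le> d" unfolding d0_def by (rule Min_le[OF finD])
  qed
  define u0 where "u0 = u c0 d0"
  define A where "A = {(e1,e2). (e1 = u0 \<and> d0 < e2) \<or> s * u0 < s * e1}"
  have "\<forall>p. \<exists>k. F (fst p) (snd p) - mono k (u (fst p) (snd p)) (snd p)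
      \<in> spn {(e1,e2). (e1 = u (fst p) (snd p) \<and> snd p < e2) \<or> s * u (fst p) (snd p) < s * e1}"
    by (intro allI LTs)
  then have "\<exists>K'. \<forall>p. F (fst p) (snd p) - mono (K' p) (u (fst p) (snd p)) (snd p)
      \<in> spn {(e1,e2). (e1 = u (fst p) (snd p) \<and> snd p < e2) \<or> s * u (fst p) (snd p) < s * e1}"
    by (rule choice)
  then obtain K' where K': "\<forall>p. F (fst p) (snd p) - mono (K' p) (u (fst p) (snd p)) (snd p)
      \<in> spn {(e1,e2). (e1 = u (fst p) (snd p) \<and> snd p < e2) \<or> s * u (fst p) (snd p) < s * e1}" ..
  define K where "K = (\<lambda>c d. K' (c,d))"
  have K: "F c d - mono (K c d) (u c d) d
      \<in> spn {(e1,e2). (e1 = u c d \<and> d < e2) \<or> s * u c d < s * e1}" for c d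
    using K'[rule_format, of "(c,d)"] unfolding K_def by simp
  define J where "J = {i. g c0 d0 i \<noteq> 0}"
  have finJ: "finite J"
  proof -
    have "J \<subseteq> (\<lambda>(c,d,i). i) ` S" by (force simp: J_def S_def)
    then show ?thesis using finite_imageI[OF finS, of "\<lambda>(c,d,i). i"] by (rule finite_subset)
  qed
  have neJ: "J \<noteq> {}" using c0P inP by (auto simp: J_def)
  define S0 where "S0 = (\<lambda>i. (c0,d0,i)) ` J"
  have S0S: "S0 \<subseteq> S" by (auto simp: S0_def J_def S_def)
  define T where "T = (\<lambda>(c,d,i). of_int (g c d i) * Q powi i * F c d)"
  have LS: "L = sum T S" unfolding eq S_def T_def by simp
  have splt: "sum T S = sum T S0 + sum T (S - S0)"
    using finS S0S by (metis add.commute sum.subset_diff)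
  have S0sum: "sum T S0 = (\<Sum>i\<in>J. of_int (g c0 d0 i) * Q powi i * F c0 d0)"
    unfolding S0_def by (subst sum.reindex) (auto intro: inj_onI simp: T_def)
  define K0 where "K0 = K c0 d0"
  have termsplit: "\<And>i. of_int (g c0 d0 i) * Q powi i * F c0 d0
      = of_int (g c0 d0 i) * mono (i + K0) u0 d0
        + of_int (g c0 d0 i) * (Q powi i * (F c0 d0 - mono K0 u0 d0))"
    by (simp add: algebra_simps Qmono u0_def K0_def)
  define first where "first = (\<Sum>i\<in>J. of_int (g c0 d0 i) * mono (i + K0) u0 d0)"
  define rest where "rest = (\<Sum>i\<in>J. of_int (g c0 d0 i) * (Q powi i * (F c0 d0 - mono K0 u0 d0)))
      + sum T (S - S0)"
  have Lfr: "L = first + rest"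
  proof -
    have "(\<Sum>i\<in>J. of_int (g c0 d0 i) * Q powi i * F c0 d0) = first +
       (\<Sum>i\<in>J. of_int (g c0 d0 i) * (Q powi i * (F c0 d0 - mono K0 u0 d0)))"
      unfolding first_def by (simp only: termsplit sum.distrib)
    then show ?thesis unfolding LS splt S0sum rest_def by (simp only: add.assoc)
  qed
  have Qsh: "\<And>y i C. y \<in> spn C \<Longrightarrow> Q powi i * y \<in> spn C"
  proof -
    fix y i C assume "y \<in> spn C"
    then have "mono i 0 0 * y \<in> spn C" by (rule spn_mono_mult) simp
    moreover have "mono i 0 0 = Q powi i" by (simp add: mono_def)
    ultimately show "Q powi i * y \<in> spn C" by simp
  qed
  have r1: "(\<Sum>i\<in>J. of_int (g c0 d0 i) * (Q powi i * (F c0 d0 - mono K0 u0 d0))) \<in> spn A"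
  proof (rule spn_sum[OF finJ])
    fix i
    have "F c0 d0 - mono K0 u0 d0 \<in> spn A"
      using K[of c0 d0] unfolding K0_def u0_def A_def by (rule spn_subset) auto
    then show "of_int (g c0 d0 i) * (Q powi i * (F c0 d0 - mono K0 u0 d0)) \<in> spn A"
      by (intro spn_smult Qsh)
  qed
  have r2: "sum T (S - S0) \<in> spn A"
  proof (rule spn_sum)
    show "finite (S - S0)" using finS by simp
  next
    fix t assume t: "t \<in> S - S0"
    obtain c d i where tcdi: "t = (c,d,i)" by (cases t) auto
    have gne: "g c d i \<noteq> 0" using t by (simp add: tcdi S_def)
    then have cdP: "(c,d) \<in> P" using inP by blast
    have ne0: "(c,d) \<noteq> (c0,d0)" using t gne by (auto simp: tcdi S0_def J_def)
    have ge: "mv \<le> s * u c d" by (rule mvle[OF cdP])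
    have Fspn: "F c d \<in> spn {(e1,e2). (e1 = u c d \<and> d \<le> e2) \<or> s * u c d < s * e1}"
    proof -
      have "mono (K c d) (u c d) d + (F c d - mono (K c d) (u c d) d)
          \<in> spn {(e1,e2). (e1 = u c d \<and> d \<le> e2) \<or> s * u c d < s * e1}"
        by (rule spn_add[OF spn_monoI spn_subset[OF K[of c d]]]) auto
      then show ?thesis by simp
    qed
    have sub: "{(e1,e2). (e1 = u c d \<and> d \<le> e2) \<or> s * u c d < s * e1} \<subseteq> A"
    proof (cases "mv < s * u c d")
      case True
      then show ?thesis using c0m s by (auto simp: A_def u0_def)
    next
      case False
      then have eqm: "s * u c d = mv" using ge by simp
      then have uu: "u c d = u0" using c0m s by (auto simp: u0_def)
      have "d0 \<le> d" by (rule d0le[OF cdP eqm])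
      moreover have "d \<noteq> d0"
      proof
        assume "d = d0"
        then have "c = c0" using uu inj by (auto simp: u0_def)
        then show False using ne0 \<open>d = d0\<close> by simp
      qed
      ultimately have "d0 < d" by simp
      then show ?thesis using uu by (auto simp: A_def)
    qed
    have "of_int (g c d i) * (Q powi i * F c d) \<in> spn A"
      by (intro spn_smult Qsh spn_subset[OF Fspn sub])
    then show "T t \<in> spn A" by (simp add: T_def tcdi mult.assoc)
  qed
  have restA: "rest \<in> spn A" unfolding rest_def by (rule spn_add[OF r1 r2])
  have firstBA: "first \<in> spn (B \<union> A)"
  proof -
    have "first = L - rest" using Lfr by simp
    then show ?thesis using spn_diff[OF spn_subset[OF LB] spn_subset[OF restA]] by auto
  qed
  have inB: "(u0, d0) \<in> B"
  proof (rule ccontr)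
    assume nB: "(u0, d0) \<notin> B"
    have nBA: "(u0, d0) \<notin> B \<union> A" using nB by (auto simp: A_def)
    obtain i where iJ: "i \<in> J" using neJ by blast
    have "g c0 d0 i = 0"
      by (rule sep[OF finJ _ firstBA[unfolded first_def] nBA iJ]) (auto intro: inj_onI)
    then show False using iJ by (simp add: J_def)
  qed
  show ?thesis
  proof (rule exI[of _ c0], rule exI[of _ d0], intro conjI allI impI)
    show "\<exists>i. g c0 d0 i \<noteq> 0" using c0P inP by blast
    show "(u c0 d0, d0) \<in> B" using inB by (simp add: u0_def)
    fix c d assume "\<exists>i. g c d i \<noteq> 0"
    then have "(c,d) \<in> P" using inP by blast
    then show "s * u c0 d0 \<le> s * u c d" using mvle c0m by simp
  qed
qed

end


context qtx begin

lemma LT1_ex: "\<exists>k. stdmon Q X c d - mono k c d \<in> spn {(e1,e2). (e1 = c \<and> d < e2) \<or> 1 * c < 1 * e1}"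
proof -
  obtain k where k: "stdmon Q X c d - mono k c d \<in> spn {(e1,e2). (e1 = c \<and> d < e2) \<or>
      (1 * c < 1 * e1 \<and> 1 * e1 \<le> 1 * (c + int (posp (-d))))}"
    using LT1_stdmon[of c d] unfolding LT_def by blast
  have "stdmon Q X c d - mono k c d \<in> spn {(e1,e2). (e1 = c \<and> d < e2) \<or> 1 * c < 1 * e1}"
    by (rule spn_subset[OF k]) auto
  then show ?thesis by blast
qed

lemma LT2_ex: "\<exists>k. stdmon Q X c d - mono k (c + int (posp (-d))) d \<in> spn {(e1,e2).
   (e1 = c + int (posp (-d)) \<and> d < e2) \<or> -1 * (c + int (posp (-d))) < -1 * e1}"
proof -
  obtain k where k: "stdmon Q X c d - mono k (c + int (posp (-d))) d \<in> spn {(e1,e2).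
      (e1 = c + int (posp (-d)) \<and> d < e2) \<or>
      (-1 * (c + int (posp (-d))) < -1 * e1 \<and> -1 * e1 \<le> -1 * c)}"
    using LT2_stdmon[of c d] unfolding LT_def by blast
  have "stdmon Q X c d - mono k (c + int (posp (-d))) d \<in> spn {(e1,e2).
   (e1 = c + int (posp (-d)) \<and> d < e2) \<or> -1 * (c + int (posp (-d))) < -1 * e1}"
    by (rule spn_subset[OF k]) auto
  then show ?thesis by blast
qed

end

theorem lemma4p6:
  fixes Q :: "'a::division_ring" and X :: "int \<Rightarrow> 'a"
    and a b :: int and g :: "int \<Rightarrow> int \<Rightarrow> int \<Rightarrow> int"
  assumes torus: "quantum_torus_gens Q (X 1) (X 2)"
    and seq: "cluster_seq Q X"
    and hb: "b \<le> 0"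
    and fin: "finite {(c, d, i). g c d i \<noteq> 0}"
    and expansion:
      "Q powi (- (a - b)) * X 4 * stdmon Q X a b - stdmon Q X (a - 1) (b - 1)
         = (\<Sum>(c, d, i)\<in>{(c, d, i). g c d i \<noteq> 0}. of_int (g c d i) * Q powi i * stdmon Q X c d)"
  shows "\<forall>c d. (\<exists>i. g c d i \<noteq> 0) \<longrightarrow>
           (if a > 0 then c \<ge> a - 1 else c \<ge> a) \<and>
           (if d \<ge> 0 then c \<le> a - b else c - d \<le> a - b)"
proof -
  have q1: "qt Q (X 1) (X 2)" using torus unfolding qt_def quantum_torus_gens_def by blast
  have so: "\<forall>k. odd k \<longrightarrow> X (k - 1) * X (k + 1) = Q * X k + 1"
    and se: "\<forall>k. even k \<longrightarrow> X (k - 1) * X (k + 1) = Q ^ 4 * X k ^ 4 + 1"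
    using seq unfolding cluster_seq_def by blast+
  have e1: "X 0 * X 2 = Q * X 1 + 1" using so[rule_format, of 1] by simp
  have e2: "X 1 * X 3 = Q^4 * X 2^4 + 1" using se[rule_format, of 2] by simp
  have e3: "X 2 * X 4 = Q * X 3 + 1" using so[rule_format, of 3] by simp
  have q2: "qtx_axioms Q X" unfolding qtx_axioms_def using e1 e2 e3 by blast
  interpret qtx Q X by (rule qtx.intro[OF q1 q2])
  let ?L = "Q powi (- (a - b)) * X 4 * stdmon Q X a b - stdmon Q X (a - 1) (b - 1)"
  let ?B = "{(e1,e2). (if a > 0 then a - 1 else a) \<le> e1 \<and> e1 \<le> a - b}"
  have LB: "?L \<in> spn ?B" by (rule L_bound[OF hb])
  show ?thesis
  proof (intro allI impI)
    fix c d assume "\<exists>i. g c d i \<noteq> 0"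
    then obtain i1 where ne: "g c d i1 \<noteq> 0" by blast
    have E1: "\<exists>c0 d0. (\<exists>i. g c0 d0 i \<noteq> 0) \<and> (c0, d0) \<in> ?B \<and>
            (\<forall>c d. (\<exists>i. g c d i \<noteq> 0) \<longrightarrow> 1 * c0 \<le> 1 * c)"
      by (rule corner_extract[where s = 1 and u = "\<lambda>c d. c" and F = "stdmon Q X",
            OF _ fin LT1_ex _ expansion LB ne]) auto
    then obtain c0 d0 where c0: "(c0, d0) \<in> ?B" "\<forall>c d. (\<exists>i. g c d i \<noteq> 0) \<longrightarrow> 1 * c0 \<le> 1 * c"
      by blast
    have E2: "\<exists>c0 d0. (\<exists>i. g c0 d0 i \<noteq> 0) \<and> (c0 + int (posp (-d0)), d0) \<in> ?B \<and>
            (\<forall>c d. (\<exists>i. g c d i \<noteq> 0) \<longrightarrow> -1 * (c0 + int (posp (-d0))) \<le> -1 * (c + int (posp (-d))))"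
      by (rule corner_extract[where s = "-1" and u = "\<lambda>c d. c + int (posp (-d))" and F = "stdmon Q X",
            OF _ fin LT2_ex _ expansion LB ne]) auto
    then obtain c1 d1 where c1: "(c1 + int (posp (-d1)), d1) \<in> ?B"
      "\<forall>c d. (\<exists>i. g c d i \<noteq> 0) \<longrightarrow> -1 * (c1 + int (posp (-d1))) \<le> -1 * (c + int (posp (-d)))"
      by blast
    have h1: "c0 \<le> c" using c0(2)[rule_format, of c d] ne by auto
    have h2: "c + int (posp (-d)) \<le> c1 + int (posp (-d1))"
    proof -
      have "-1 * (c1 + int (posp (-d1))) \<le> -1 * (c + int (posp (-d)))"
        using c1(2)[rule_format, of c d] ne by blast
      then show ?thesis by simp
    qed
    have h3: "(if a > 0 then a - 1 else a) \<le> c0" using c0(1) by auto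
    have h4: "c1 + int (posp (-d1)) \<le> a - b" using c1(1) by auto
    have pd: "int (posp (-d)) = max (-d) 0" by (simp add: posp_def)
    show "(if a > 0 then c \<ge> a - 1 else c \<ge> a) \<and>
           (if d \<ge> 0 then c \<le> a - b else c - d \<le> a - b)"
      using h1 h2 h3 h4 pd by (auto split: if_splits)
  qed
qed

end
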